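(* Let $k\ge1$, $A,B_1,\dots,B_k,C\in\mathbb{C}^{r\times r}$ with $C+mI$ invertible for all $m\ge0$. Fix $i$ and $n\ge1$ and suppose $B_i+mI$ is invertible for all $m\ge0$. Then $$F_{\mathcal D}[B_i+nI]=F_{\mathcal D}+x_iA\Big[\sum_{n_1=1}^nF_{\mathcal D}[A+I,\,B_i+n_1I,\,C+I]\Big]C^{-1}.$$ Furthermore, if $B_i-n_1I$ is invertible for $0\le n_1\le n$, then $$F_{\mathcal D}[B_i-nI]=F_{\mathcal D}-x_iA\Big[\sum_{n_1=0}^{n-1}F_{\mathcal D}[A+I,\,B_i-n_1I,\,C+I]\Big]C^{-1}.$$
   Context: For $M\in\mathbb{C}^{r\times r}$: $(M)_0=I$, $(M)_m=M(M+I)\cdots(M+(m-1)I)$, $(M)^{-1}_m=((M)_m)^{-1}$. $$F_{\mathcal D}=F_{\mathcal D}[A,B_1,\dots,B_k;C;x_1,\dots,x_k]=\sum_{m_1,\dots,m_k\ge0}(A)_{m_1+\cdots+m_k}\prod_{j=1}^k(B_j)_{m_j}\,(C)^{-1}_{m_1+\cdots+m_k}\prod_{j=1}^k\frac{x_j^{m_j}}{m_j!},$$ $x_j$ scalar variables, matrix products in order of increasing index; identities are of formal power series in the $x_j$. $F_{\mathcal D}[\dots]$ lists only the shifted parameters, all others unchanged. *)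

theory Defs
  imports "HOL-Analysis.Analysis"
begin

type_synonym 'n cmat = "complex^'n^'n"

fun mpoch :: "'n::finite cmat \<Rightarrow> nat \<Rightarrow> 'n cmat" where
  "mpoch M 0 = mat 1"
| "mpoch M (Suc m) = mpoch M m ** (M + mat (of_nat m))"

fun ordprod :: "(nat \<Rightarrow> 'n::finite cmat) \<Rightarrow> nat \<Rightarrow> 'n cmat" where
  "ordprod f 0 = mat 1"
| "ordprod f (Suc n) = ordprod f n ** f n"

text \<open>A formal power series in x_0,...,x_(k-1) with matrix coefficients is represented
  by its coefficient function on multi-indices m :: nat => nat (coefficient of
  prod_j x_j^(m j)); coefficients of multi-indices not supported in {..<k} are 0.\<close>
definition FD :: "nat \<Rightarrow> 'n::finite cmat \<Rightarrow> (nat \<Rightarrow> 'n cmat) \<Rightarrow> 'n cmat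
    \<Rightarrow> (nat \<Rightarrow> nat) \<Rightarrow> 'n cmat" where
  "FD k A B C m =
     (if \<forall>j\<ge>k. m j = 0 then
        (inverse (real (\<Prod>j<k. fact (m j)))) *\<^sub>R
          (mpoch A (\<Sum>j<k. m j) ** ordprod (\<lambda>j. mpoch (B j) (m j)) k
             ** matrix_inv (mpoch C (\<Sum>j<k. m j)))
      else 0)"

definition xmul :: "nat \<Rightarrow> ((nat \<Rightarrow> nat) \<Rightarrow> 'n::finite cmat) \<Rightarrow> (nat \<Rightarrow> nat) \<Rightarrow> 'n cmat" where
  "xmul i G m = (if m i \<ge> 1 then G (m(i := m i - 1)) else 0)"

end

theory Submission imports Defs begin

lemma mm_add_rdistrib: "((A::'a::semiring_1^'n^'m) + B) ** C = A ** C + B ** C"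
  by (vector matrix_matrix_mult_def sum.distrib[symmetric] field_simps)
lemma mm_diff_ldistrib: "(A::'a::ring_1^'n^'m) ** (B - C) = A ** B - A ** C"
  by (vector matrix_matrix_mult_def sum_subtractf[symmetric] field_simps)
lemma mm_diff_rdistrib: "((A::'a::ring_1^'n^'m) - B) ** C = A ** C - B ** C"
  by (vector matrix_matrix_mult_def sum_subtractf[symmetric] field_simps)
lemma mat_add: "mat (a + b) = (mat a + mat b :: 'a::semiring_1^'n^'n)"
  by (vector mat_def)
lemma mm_sum_ldistrib: "finite S \<Longrightarrow> (A::'a::semiring_1^'n^'m) ** (\<Sum>x\<in>S. f x) = (\<Sum>x\<in>S. A ** f x)"
  by (induction S rule: finite_induct) (auto simp: matrix_add_ldistrib)
lemma mm_sum_rdistrib: "finite S \<Longrightarrow> (\<Sum>x\<in>S. f x) ** (A::'a::semiring_1^'n^'m) = (\<Sum>x\<in>S. f x ** A)"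
  by (induction S rule: finite_induct) (auto simp: mm_add_rdistrib)

lemma matrix_inv_props:
  assumes "invertible (M::complex^'n^'n)"
  shows "M ** matrix_inv M = mat 1" "matrix_inv M ** M = mat 1"
  using someI_ex[OF assms[unfolded invertible_def]] unfolding matrix_inv_def by auto

lemma matrix_inv_unique:
  assumes "invertible (M::complex^'n^'n)" "M ** N = mat 1"
  shows "matrix_inv M = N"
  by (metis assms matrix_inv_props(2) matrix_mul_assoc matrix_mul_lid matrix_mul_rid)

lemma matrix_inv_mult:
  assumes "invertible (X::complex^'n^'n)" "invertible (Y::complex^'n^'n)"
  shows "matrix_inv (X ** Y) = matrix_inv Y ** matrix_inv X"
proof -
  have "X ** Y ** (matrix_inv Y ** matrix_inv X) = X ** (Y ** matrix_inv Y) ** matrix_inv X"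
    by (simp add: matrix_mul_assoc)
  also have "\<dots> = mat 1" using matrix_inv_props[OF assms(1)] matrix_inv_props[OF assms(2)] by simp
  finally show ?thesis using matrix_inv_unique invertible_mult assms by blast
qed

lemma mat_shift: "M + mat 1 + mat (of_nat b) = M + mat (of_nat (Suc b))"
  by (simp only: add.assoc mat_add[symmetric] of_nat_Suc)

lemma mat_shift2: "M + mat (of_nat (Suc b)) = M + mat (of_nat b) + mat 1"
proof -
  have "M + mat (of_nat b) + mat 1 = M + mat (of_nat b + 1)" by (simp only: add.assoc mat_add)
  then show ?thesis by (simp add: add.commute)
qed

lemma mpoch_Suc': "mpoch M (Suc m) = M ** mpoch (M + mat 1) m"
proof (induction m)
  case 0 then show ?case by simp
next
  case (Suc m)
  have "mpoch M (Suc (Suc m)) = M ** mpoch (M + mat 1) m ** (M + mat (of_nat (Suc m)))"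
    using Suc by simp
  also have "M + mat (of_nat (Suc m)) = M + mat 1 + mat (of_nat m)"
    by (rule mat_shift[symmetric])
  finally show ?case by (simp add: matrix_mul_assoc)
qed

lemma mpoch_diff: "mpoch (M + mat 1) (Suc m) = mpoch M (Suc m) + of_nat (Suc m) *\<^sub>R mpoch (M + mat 1) m"
proof (induction m)
  case 0
  have a: "mpoch (M + mat 1) (Suc 0) = M + mat 1" by simp
  have b: "mpoch M (Suc 0) = M" by simp
  have c: "of_nat (Suc 0) *\<^sub>R mpoch (M + mat 1) 0 = mat 1" by simp
  show ?case by (simp only: a b c)
next
  case (Suc m)
  let ?Q = "mpoch (M + mat 1) (Suc m)"
  have e: "M + mat 1 + mat (of_nat (Suc m)) = M + mat (of_nat (Suc (Suc m)))"
    by (rule mat_shift)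
  have e2: "M + mat (of_nat (Suc m)) = M + mat 1 + mat (of_nat m)"
    by (rule mat_shift[symmetric])
  have "mpoch (M + mat 1) (Suc (Suc m)) = ?Q ** (M + mat (of_nat (Suc (Suc m))))"
    using mpoch.simps(2)[of "M + mat 1" "Suc m"] e by metis
  also have "M + mat (of_nat (Suc (Suc m))) = (M + mat (of_nat (Suc m))) + mat 1"
    by (rule mat_shift2)
  also have "?Q ** \<dots> = ?Q ** (M + mat (of_nat (Suc m))) + ?Q"
    by (simp add: matrix_add_ldistrib)
  also have "?Q ** (M + mat (of_nat (Suc m))) = mpoch M (Suc (Suc m)) + of_nat (Suc m) *\<^sub>R ?Q"
  proof -
    have "?Q ** (M + mat (of_nat (Suc m))) = (mpoch M (Suc m) + of_nat (Suc m) *\<^sub>R mpoch (M + mat 1) m) ** (M + mat (of_nat (Suc m)))"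
      using Suc by simp
    also have "\<dots> = mpoch M (Suc m) ** (M + mat (of_nat (Suc m))) + of_nat (Suc m) *\<^sub>R (mpoch (M + mat 1) m ** (M + mat 1 + mat (of_nat m)))"
      unfolding mm_add_rdistrib scalar_matrix_assoc e2 ..
    also have "\<dots> = mpoch M (Suc (Suc m)) + of_nat (Suc m) *\<^sub>R ?Q"
      by (simp only: mpoch.simps)
    finally show ?thesis .
  qed
  finally have fin: "mpoch (M + mat 1) (Suc (Suc m)) = mpoch M (Suc (Suc m)) + of_nat (Suc m) *\<^sub>R ?Q + ?Q" .
  have "(of_nat (Suc (Suc m)) :: real) *\<^sub>R ?Q = of_nat (Suc m) *\<^sub>R ?Q + ?Q"
    by (metis of_nat_Suc add.commute scaleR_add_left scaleR_one)
  then show ?case by (simp only: fin add.assoc)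
qed

lemma mpoch_diff_gen: "mpoch (M + mat 1) m = mpoch M m + of_nat m *\<^sub>R mpoch (M + mat 1) (m - 1)"
  proof (cases m)
  case 0 then show ?thesis by simp
next
  case (Suc m') then show ?thesis using mpoch_diff[of M m'] by (simp del: mpoch.simps)
qed

lemma mpoch_invertible:
  "(\<forall>j. invertible (M + mat (of_nat j))) \<Longrightarrow> invertible (mpoch M m)"
  proof (induction m)
  case 0 then show ?case using matrix_mul_lid by (auto simp: invertible_def)
next
  case (Suc m) then show ?case by (auto intro!: invertible_mult)
qed

lemma ordprod_cong: "(\<forall>j<k. f j = g j) \<Longrightarrow> ordprod f k = ordprod g k"
  by (induction k) auto

lemma ordprod_lin:
  assumes "\<forall>j. j \<noteq> i \<longrightarrow> g j = h j \<and> h j = q j" and "g i = h i + c *\<^sub>R q i" and "i < k"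
  shows "ordprod g k = ordprod h k + c *\<^sub>R ordprod q k"
  using assms(3)
proof (induction k)
  case 0 then show ?case by simp
next
  case (Suc k)
  show ?case
  proof (cases "i = k")
    case True
    have "ordprod g k = ordprod h k" "ordprod q k = ordprod h k"
      using assms(1) True by (auto intro!: ordprod_cong)
    then show ?thesis using True assms(2)
      by (simp add: matrix_add_ldistrib matrix_scalar_ac scalar_matrix_assoc)
  next
    case False
    then have "i < k" using Suc by simp
    then show ?thesis using Suc.IH assms(1) False
      by (simp add: mm_add_rdistrib scalar_matrix_assoc)
  qed
qed

lemma sc_left: "k *\<^sub>R (A::complex^'n^'n) ** B = k *\<^sub>R (A ** B)"
  by (simp add: scalar_matrix_assoc)
lemma sc_right: "(A::complex^'n^'n) ** (k *\<^sub>R B) = k *\<^sub>R (A ** B)"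
  by (simp add: matrix_scalar_ac scalar_matrix_assoc)

lemma FD_step:
  fixes A C :: "'n::finite cmat" and B :: "nat \<Rightarrow> 'n cmat"
  assumes ik: "i < k" and Cinv: "\<forall>m::nat. invertible (C + mat (of_nat m))"
  shows "FD k A (B(i := B i + mat 1)) C m = FD k A B C m +
     (if m i \<ge> 1 then A ** FD k (A + mat 1) (B(i := B i + mat 1)) (C + mat 1) (m(i := m i - 1)) ** matrix_inv C else 0)"
proof -
  define B2 where "B2 = B(i := B i + mat 1)"
  define m' where "m' = m(i := m i - 1)"
  have ord: "ordprod (\<lambda>j. mpoch (B2 j) (m j)) k = ordprod (\<lambda>j. mpoch (B j) (m j)) k
      + of_nat (m i) *\<^sub>R ordprod (\<lambda>j. mpoch (B2 j) (m' j)) k"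
    by (rule ordprod_lin[OF _ _ ik]) (auto simp: B2_def m'_def mpoch_diff_gen[of "B i" "m i"])
  show ?thesis
  proof (cases "\<forall>j\<ge>k. m j = 0")
    case False
    then have F2: "\<not> (\<forall>j\<ge>k. m' j = 0)" using ik by (auto simp: m'_def)
    have z1: "FD k X Y Z m = 0" for X Y Z
      unfolding FD_def using False by (subst if_not_P) auto
    have z2: "FD k X Y Z m' = 0" for X Y Z
      unfolding FD_def using F2 by (subst if_not_P) auto
    show ?thesis unfolding B2_def[symmetric] m'_def[symmetric] by (simp add: z1 z2)
  next
    case supp: True
    show ?thesis
    proof (cases "m i = 0")
      case True
      then show ?thesis using supp ord unfolding B2_def[symmetric] m'_def[symmetric] by (simp add: FD_def)
    next
      case False
      then have mi: "m i = Suc (m' i)" by (simp add: m'_def)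
      have supp': "\<forall>j\<ge>k. m' j = 0" using supp by (simp add: m'_def)
      have mdec: "m j = m' j + (if j = i then 1 else 0)" for j using mi by (simp add: m'_def)
      have S: "(\<Sum>j<k. m j) = Suc (\<Sum>j<k. m' j)"
        using ik by (subst mdec) (simp add: sum.distrib)
      have P: "(\<Prod>j<k. fact (m j) :: nat) = m i * (\<Prod>j<k. fact (m' j))"
      proof -
        have "(\<Prod>j<k. fact (m j) :: nat) = fact (m i) * (\<Prod>j\<in>{..<k} - {i}. fact (m j))"
          using ik by (simp add: prod.remove)
        also have "(\<Prod>j\<in>{..<k} - {i}. fact (m j) :: nat) = (\<Prod>j\<in>{..<k} - {i}. fact (m' j))"
          by (rule prod.cong) (auto simp: m'_def)
        also have "(\<Prod>j<k. fact (m' j) :: nat) = fact (m' i) * (\<Prod>j\<in>{..<k} - {i}. fact (m' j))"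
          using ik by (simp add: prod.remove)
        ultimately show ?thesis using mi by (simp add: algebra_simps)
      qed
      define S' where "S' = (\<Sum>j<k. m' j)"
      define P' where "P' = (\<Prod>j<k. fact (m' j) :: nat)"
      define oh where "oh = ordprod (\<lambda>j. mpoch (B j) (m j)) k"
      define oq where "oq = ordprod (\<lambda>j. mpoch (B2 j) (m' j)) k"
      have P'pos: "P' > 0" unfolding P'_def by (simp add: prod_pos)
      have invC: "invertible C" using Cinv[rule_format, of 0] by simp
      have invC1: "invertible (mpoch (C + mat 1) S')"
        using Cinv by (intro mpoch_invertible allI) (metis mat_shift)
      have mA: "mpoch A (Suc S') = A ** mpoch (A + mat 1) S'" by (rule mpoch_Suc')
      have mC: "matrix_inv (mpoch C (Suc S')) = matrix_inv (mpoch (C + mat 1) S') ** matrix_inv C"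
        by (simp only: mpoch_Suc' matrix_inv_mult[OF invC invC1])
      have sc: "inverse (real (m i * P')) * real (m i) = inverse (real P')"
        using False by (simp add: field_simps)
      have "FD k A B2 C m = inverse (real (m i * P')) *\<^sub>R
           (mpoch A (Suc S') ** (oh + of_nat (m i) *\<^sub>R oq) ** matrix_inv (mpoch C (Suc S')))"
        unfolding FD_def using supp by (simp add: S P ord oh_def oq_def S'_def P'_def)
      also have "\<dots> = FD k A B C m + (inverse (real (m i * P')) * real (m i)) *\<^sub>R
           (mpoch A (Suc S') ** oq ** matrix_inv (mpoch C (Suc S')))"
        unfolding FD_def using supp
        by (simp add: S P oh_def S'_def P'_def matrix_add_ldistrib mm_add_rdistrib sc_left sc_right scaleR_add_right)
      also have "\<dots> = FD k A B C m + A ** FD k (A + mat 1) B2 (C + mat 1) m' ** matrix_inv C"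
        unfolding sc mA mC FD_def using supp'
        by (simp add: oq_def S'_def P'_def sc_left sc_right matrix_mul_assoc)
      finally show ?thesis using False unfolding B2_def[symmetric] m'_def[symmetric] by simp
    qed
  qed
qed

lemma mat_Suc: "mat (of_nat (Suc n)) = (mat (of_nat n) + mat 1 :: 'a::semiring_1^'m^'m)"
  by (metis mat_add of_nat_Suc add.commute)

lemma FD_plus:
  fixes A C :: "'n::finite cmat" and B :: "nat \<Rightarrow> 'n cmat"
  assumes ik: "i < k" and Cinv: "\<forall>m::nat. invertible (C + mat (of_nat m))"
  shows "FD k A (B(i := B i + mat (of_nat n))) C m = FD k A B C m +
     (if m i \<ge> 1 then A ** (\<Sum>n1\<in>{1..n}. FD k (A + mat 1) (B(i := B i + mat (of_nat n1))) (C + mat 1) (m(i := m i - 1))) ** matrix_inv C else 0)"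
proof (induction n)
  case 0 then show ?case by simp
next
  case (Suc n)
  define B' where "B' = B(i := B i + mat (of_nat n))"
  have e: "B'(i := B' i + mat 1) = B(i := B i + mat (of_nat (Suc n)))"
    unfolding B'_def by (simp only: fun_upd_upd fun_upd_same mat_shift2[symmetric])
  have st: "FD k A (B'(i := B' i + mat 1)) C m = FD k A B' C m +
     (if m i \<ge> 1 then A ** FD k (A + mat 1) (B'(i := B' i + mat 1)) (C + mat 1) (m(i := m i - 1)) ** matrix_inv C else 0)"
    by (rule FD_step[OF ik Cinv])
  define F where "F = (\<lambda>n1. FD k (A + mat 1) (B(i := B i + mat (of_nat n1))) (C + mat 1) (m(i := m i - 1)))"
  have st2: "FD k A (B(i := B i + mat (of_nat (Suc n)))) C m = FD k A B' C m +
     (if m i \<ge> 1 then A ** F (Suc n) ** matrix_inv C else 0)"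
    using st unfolding e F_def .
  have IH: "FD k A B' C m = FD k A B C m + (if m i \<ge> 1 then A ** (\<Sum>n1\<in>{1..n}. F n1) ** matrix_inv C else 0)"
    using Suc unfolding B'_def F_def .
  have sm: "(\<Sum>n1\<in>{1..Suc n}. F n1) = (\<Sum>n1\<in>{1..n}. F n1) + F (Suc n)" by simp
  show ?case unfolding F_def[symmetric] st2 IH sm
    by (simp add: matrix_add_ldistrib mm_add_rdistrib add.assoc)
qed

lemma FD_minus:
  fixes A C :: "'n::finite cmat" and B :: "nat \<Rightarrow> 'n cmat"
  assumes ik: "i < k" and Cinv: "\<forall>m::nat. invertible (C + mat (of_nat m))"
  shows "FD k A (B(i := B i - mat (of_nat n))) C m = FD k A B C m -
     (if m i \<ge> 1 then A ** (\<Sum>n1\<in>{0..<n}. FD k (A + mat 1) (B(i := B i - mat (of_nat n1))) (C + mat 1) (m(i := m i - 1))) ** matrix_inv C else 0)"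
proof (induction n)
  case 0 then show ?case by simp
next
  case (Suc n)
  define B' where "B' = B(i := B i - mat (of_nat (Suc n)))"
  have e: "B'(i := B' i + mat 1) = B(i := B i - mat (of_nat n))"
  proof -
    have "B i - mat (of_nat (Suc n)) + mat 1 = B i - mat (of_nat n)"
      by (simp only: mat_Suc) (simp add: algebra_simps)
    then show ?thesis unfolding B'_def by (simp only: fun_upd_upd fun_upd_same)
  qed
  have st: "FD k A (B'(i := B' i + mat 1)) C m = FD k A B' C m +
     (if m i \<ge> 1 then A ** FD k (A + mat 1) (B'(i := B' i + mat 1)) (C + mat 1) (m(i := m i - 1)) ** matrix_inv C else 0)"
    by (rule FD_step[OF ik Cinv])
  define F where "F = (\<lambda>n1. FD k (A + mat 1) (B(i := B i - mat (of_nat n1))) (C + mat 1) (m(i := m i - 1)))"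
  have st2: "FD k A (B(i := B i - mat (of_nat n))) C m = FD k A B' C m +
     (if m i \<ge> 1 then A ** F n ** matrix_inv C else 0)"
    using st unfolding e F_def .
  have IH: "FD k A (B(i := B i - mat (of_nat n))) C m = FD k A B C m - (if m i \<ge> 1 then A ** (\<Sum>n1\<in>{0..<n}. F n1) ** matrix_inv C else 0)"
    using Suc unfolding F_def .
  have sm: "(\<Sum>n1\<in>{0..<Suc n}. F n1) = (\<Sum>n1\<in>{0..<n}. F n1) + F n" by simp
  have "FD k A B' C m = FD k A B C m - (if m i \<ge> 1 then A ** (\<Sum>n1\<in>{0..<Suc n}. F n1) ** matrix_inv C else 0)"
    using st2 IH unfolding sm by (simp add: matrix_add_ldistrib mm_add_rdistrib algebra_simps)
  then show ?case unfolding F_def B'_def .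

qed

theorem mainTheorem13:
  fixes k i n :: nat and A C :: "'n::finite cmat" and B :: "nat \<Rightarrow> 'n cmat"
  assumes "k \<ge> 1" and "i < k" and "n \<ge> 1"
    and "\<forall>m::nat. invertible (C + mat (of_nat m))"
    and "\<forall>m::nat. invertible (B i + mat (of_nat m))"
  shows "FD k A (B(i := B i + mat (of_nat n))) C =
           (\<lambda>m. FD k A B C m
              + xmul i (\<lambda>m'. A ** (\<Sum>n1\<in>{1..n}.
                    FD k (A + mat 1) (B(i := B i + mat (of_nat n1))) (C + mat 1) m')
                  ** matrix_inv C) m)
       \<and> ((\<forall>n1\<le>n. invertible (B i - mat (of_nat n1))) \<longrightarrow>
          FD k A (B(i := B i - mat (of_nat n))) C =
           (\<lambda>m. FD k A B C m
              - xmul i (\<lambda>m'. A ** (\<Sum>n1\<in>{0..n-1}.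
                    FD k (A + mat 1) (B(i := B i - mat (of_nat n1))) (C + mat 1) m')
                  ** matrix_inv C) m))"
proof -
  have iv: "{0..n-1} = {0..<n}" using assms(3) by auto
  show ?thesis
    unfolding xmul_def iv
    using FD_plus[OF assms(2) assms(4)] FD_minus[OF assms(2) assms(4)]
    by (auto simp: fun_eq_iff)
qed

end
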